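(* Let $G$ and $H$ be finite simple graphs, let $S$ be a minimal dominating set of $H$, and let $D$ be a minimal dominating set of $G$ with $c(D)\neq\emptyset$. Then for every $u\in c(D)$, the set $(\{u\} \times S) \cup \big( (D-\{u\}) \times V(H)\big)$ is a dominating set of the Cartesian product $G \,\square\, H$. If, in addition, $c(D)=\{u\}$, then $(\{u\} \times S) \cup \big( (D-\{u\}) \times V(H)\big)$ is a minimal dominating set of $G \,\square\, H$.
   Context: For $u\in A\subseteq V(G)$, the private neighborhood of $u$ with respect to $A$ is $\mathrm{pn}[u,A]=\{x\in V(G): N[x]\cap A=\{u\}\}$. For a dominating set $D$ of $G$, $c(D)=\{x\in D : \mathrm{pn}[x,D]=\{x\}\}$. The Cartesian product $G\,\square\, H$ has vertex set $V(G)\times V(H)$, with $(g_1,h_1)$ adjacent to $(g_2,h_2)$ iff either ($g_1=g_2$ and $h_1h_2\in E(H)$) or ($h_1=h_2$ and $g_1g_2\in E(G)$). *)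

theory Defs
  imports Main
begin

definition simple_graph :: "'a set \<Rightarrow> ('a \<Rightarrow> 'a \<Rightarrow> bool) \<Rightarrow> bool" where
  "simple_graph V E \<longleftrightarrow> finite V \<and> (\<forall>x y. E x y \<longrightarrow> x \<in> V \<and> y \<in> V)
     \<and> (\<forall>x y. E x y \<longrightarrow> E y x) \<and> (\<forall>x. \<not> E x x)"

definition closed_nbhd :: "'a set \<Rightarrow> ('a \<Rightarrow> 'a \<Rightarrow> bool) \<Rightarrow> 'a \<Rightarrow> 'a set" where
  "closed_nbhd V E x = {y \<in> V. y = x \<or> E x y}"

definition dominating :: "'a set \<Rightarrow> ('a \<Rightarrow> 'a \<Rightarrow> bool) \<Rightarrow> 'a set \<Rightarrow> bool" where
  "dominating V E D \<longleftrightarrow> D \<subseteq> V \<and> (\<forall>x\<in>V. closed_nbhd V E x \<inter> D \<noteq> {})"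

definition minimal_dominating :: "'a set \<Rightarrow> ('a \<Rightarrow> 'a \<Rightarrow> bool) \<Rightarrow> 'a set \<Rightarrow> bool" where
  "minimal_dominating V E D \<longleftrightarrow> dominating V E D \<and> (\<forall>D'. D' \<subset> D \<longrightarrow> \<not> dominating V E D')"

definition priv_nbhd :: "'a set \<Rightarrow> ('a \<Rightarrow> 'a \<Rightarrow> bool) \<Rightarrow> 'a \<Rightarrow> 'a set \<Rightarrow> 'a set" where
  "priv_nbhd V E u A = {x \<in> V. closed_nbhd V E x \<inter> A = {u}}"

definition cset :: "'a set \<Rightarrow> ('a \<Rightarrow> 'a \<Rightarrow> bool) \<Rightarrow> 'a set \<Rightarrow> 'a set" where
  "cset V E D = {x \<in> D. priv_nbhd V E x D = {x}}"

definition cart_edge :: "('a \<Rightarrow> 'a \<Rightarrow> bool) \<Rightarrow> ('b \<Rightarrow> 'b \<Rightarrow> bool) \<Rightarrow> 'a \<times> 'b \<Rightarrow> 'a \<times> 'b \<Rightarrow> bool" where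
  "cart_edge EG EH p q \<longleftrightarrow>
     (fst p = fst q \<and> EH (snd p) (snd q)) \<or> (snd p = snd q \<and> EG (fst p) (fst q))"

end

theory Submission
  imports Defs
begin

lemma priv_exists:
  assumes "minimal_dominating V E D" "d \<in> D"
  shows "\<exists>x\<in>V. closed_nbhd V E x \<inter> D = {d}"
proof (rule ccontr)
  assume a: "\<not> ?thesis"
  have dom: "dominating V E D" using assms(1) unfolding minimal_dominating_def by blast
  have "dominating V E (D - {d})"
    unfolding dominating_def
  proof (intro conjI ballI)
    show "D - {d} \<subseteq> V" using dom unfolding dominating_def by blast
  next
    fix x assume x: "x \<in> V"
    have "closed_nbhd V E x \<inter> D \<noteq> {}" using dom x unfolding dominating_def by blast
    moreover have "closed_nbhd V E x \<inter> D \<noteq> {d}" using a x by blast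
    ultimately show "closed_nbhd V E x \<inter> (D - {d}) \<noteq> {}" by blast
  qed
  moreover have "D - {d} \<subset> D" using assms(2) by blast
  ultimately show False using assms(1) unfolding minimal_dominating_def by blast
qed

lemma min_from_priv:
  assumes "dominating V E A" "\<forall>p\<in>A. \<exists>x\<in>V. closed_nbhd V E x \<inter> A = {p}"
  shows "minimal_dominating V E A"
  unfolding minimal_dominating_def
proof (intro conjI allI impI)
  show "dominating V E A" by fact
next
  fix D' assume "D' \<subset> A"
  then obtain p where p: "p \<in> A" "p \<notin> D'" by blast
  then obtain x where "x \<in> V" "closed_nbhd V E x \<inter> A = {p}" using assms(2) by blast
  moreover have "D' \<subseteq> A" using \<open>D' \<subset> A\<close> by blast
  moreover have "closed_nbhd V E x \<inter> D' = {}" using p calculation by auto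
  ultimately have "x \<in> V" "closed_nbhd V E x \<inter> D' = {}" by blast+
  then show "\<not> dominating V E D'" unfolding dominating_def by blast
qed

lemma nbhd_prod:
  "closed_nbhd (VG \<times> VH) (cart_edge EG EH) (g, h) =
     {(g', h'). g' \<in> VG \<and> h' \<in> VH \<and> ((g' = g \<and> (h' = h \<or> EH h h')) \<or> (h' = h \<and> EG g g'))}"
  unfolding closed_nbhd_def cart_edge_def by auto

theorem lemma17:
  fixes VG :: "'a set" and EG :: "'a \<Rightarrow> 'a \<Rightarrow> bool"
    and VH :: "'b set" and EH :: "'b \<Rightarrow> 'b \<Rightarrow> bool"
    and S :: "'b set" and D :: "'a set"
  assumes "simple_graph VG EG" and "simple_graph VH EH"
    and "minimal_dominating VH EH S"
    and "minimal_dominating VG EG D"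
    and "cset VG EG D \<noteq> {}"
  shows "\<forall>u \<in> cset VG EG D.
           dominating (VG \<times> VH) (cart_edge EG EH) (({u} \<times> S) \<union> ((D - {u}) \<times> VH))
         \<and> (cset VG EG D = {u} \<longrightarrow>
              minimal_dominating (VG \<times> VH) (cart_edge EG EH) (({u} \<times> S) \<union> ((D - {u}) \<times> VH)))"
proof (intro ballI conjI impI)
  fix u assume u: "u \<in> cset VG EG D"
  define A where "A = ({u} \<times> S) \<union> ((D - {u}) \<times> VH)"
  have gG: "simple_graph VG EG" and gH: "simple_graph VH EH" by fact+
  have domD: "dominating VG EG D" using assms(4) unfolding minimal_dominating_def by blast
  have domS: "dominating VH EH S" using assms(3) unfolding minimal_dominating_def by blast
  have uD: "u \<in> D" and pu: "priv_nbhd VG EG u D = {u}" using u unfolding cset_def by auto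
  have DV: "D \<subseteq> VG" using domD unfolding dominating_def by blast
  have SV: "S \<subseteq> VH" using domS unfolding dominating_def by blast
  have uV: "u \<in> VG" using uD DV by blast
  have Esym: "\<And>x y. EG x y \<Longrightarrow> EG y x" and EV: "\<And>x y. EG x y \<Longrightarrow> x \<in> VG \<and> y \<in> VG"
    and Eirr: "\<And>x. \<not> EG x x"
    using gG unfolding simple_graph_def by blast+
  have HV: "\<And>x y. EH x y \<Longrightarrow> x \<in> VH \<and> y \<in> VH" and Hsym: "\<And>x y. EH x y \<Longrightarrow> EH y x"
    using gH unfolding simple_graph_def by blast+
  have unoD: "\<And>g. EG u g \<Longrightarrow> g \<notin> D"
  proof -
    fix g assume "EG u g"
    have "u \<in> priv_nbhd VG EG u D" using pu by blast
    hence "closed_nbhd VG EG u \<inter> D = {u}" unfolding priv_nbhd_def by blast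
    moreover have "g \<in> closed_nbhd VG EG u" using \<open>EG u g\<close> EV unfolding closed_nbhd_def by blast
    moreover have "g \<noteq> u" using \<open>EG u g\<close> Eirr by blast
    ultimately show "g \<notin> D" by blast
  qed
  have unb: "\<And>g. g \<in> VG \<Longrightarrow> EG g u \<Longrightarrow> \<exists>d\<in>D. d \<noteq> u \<and> EG g d"
  proof -
    fix g assume g: "g \<in> VG" "EG g u"
    have "g \<noteq> u" using g Eirr by blast
    hence "g \<notin> priv_nbhd VG EG u D" using pu by blast
    moreover have "u \<in> closed_nbhd VG EG g \<inter> D" using g uD uV unfolding closed_nbhd_def by blast
    ultimately obtain d where d: "d \<in> closed_nbhd VG EG g" "d \<in> D" "d \<noteq> u"
      using g unfolding priv_nbhd_def by blast
    have "g \<notin> D" using unoD Esym g by blast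
    hence "d \<noteq> g" using d by blast
    thus "\<exists>d\<in>D. d \<noteq> u \<and> EG g d" using d unfolding closed_nbhd_def by blast
  qed
  have domA: "dominating (VG \<times> VH) (cart_edge EG EH) A"
    unfolding dominating_def
  proof (intro conjI ballI)
    show "A \<subseteq> VG \<times> VH" unfolding A_def using uV SV DV by blast
  next
    fix p assume p: "p \<in> VG \<times> VH"
    obtain g h where gh: "p = (g, h)" "g \<in> VG" "h \<in> VH" using p by blast
    show "closed_nbhd (VG \<times> VH) (cart_edge EG EH) p \<inter> A \<noteq> {}"
    proof (cases "g \<in> D - {u}")
      case True
      then have "(g, h) \<in> closed_nbhd (VG \<times> VH) (cart_edge EG EH) p \<inter> A"
        using gh by (auto simp: nbhd_prod A_def)
      then show ?thesis by blast
    next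
      case False
      show ?thesis
      proof (cases "g = u")
        case True
        obtain s where s: "s \<in> closed_nbhd VH EH h" "s \<in> S"
          using domS gh unfolding dominating_def by blast
        have "(u, s) \<in> closed_nbhd (VG \<times> VH) (cart_edge EG EH) p \<inter> A"
          using s gh True uV SV unfolding gh(1) True nbhd_prod A_def by (auto simp: closed_nbhd_def)
        then show ?thesis by blast
      next
        case gu: False
        hence gD: "g \<notin> D" using False by blast
        obtain d where d: "d \<in> closed_nbhd VG EG g" "d \<in> D"
          using domD gh unfolding dominating_def by blast
        have "d \<noteq> g" using d gD by blast
        hence Egd: "EG g d" using d unfolding closed_nbhd_def by blast
        obtain d' where d': "d' \<in> D" "d' \<noteq> u" "EG g d'"
        proof (cases "d = u")
          case True
          then show ?thesis using unb[OF gh(2)] Egd that by blast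
        next
          case False
          then show ?thesis using that d Egd by blast
        qed
        have "(d', h) \<in> closed_nbhd (VG \<times> VH) (cart_edge EG EH) p \<inter> A"
          using d' gh DV by (auto simp: nbhd_prod A_def)
        then show ?thesis by blast
      qed
    qed
  qed
  then show "dominating (VG \<times> VH) (cart_edge EG EH) (({u} \<times> S) \<union> ((D - {u}) \<times> VH))"
    unfolding A_def .
  assume cu: "cset VG EG D = {u}"
  have "minimal_dominating (VG \<times> VH) (cart_edge EG EH) A"
  proof (rule min_from_priv[OF domA], intro ballI)
    fix p assume pA: "p \<in> A"
    show "\<exists>x\<in>VG \<times> VH. closed_nbhd (VG \<times> VH) (cart_edge EG EH) x \<inter> A = {p}"
    proof (cases "p \<in> {u} \<times> S")
      case True
      then obtain s where ps: "p = (u, s)" "s \<in> S" by blast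
      obtain h where h: "h \<in> VH" "closed_nbhd VH EH h \<inter> S = {s}"
        using priv_exists[OF assms(3) ps(2)] by blast
      have "closed_nbhd (VG \<times> VH) (cart_edge EG EH) (u, h) \<inter> A = {p}"
      proof
        show "closed_nbhd (VG \<times> VH) (cart_edge EG EH) (u, h) \<inter> A \<subseteq> {p}"
        proof
          fix q assume q: "q \<in> closed_nbhd (VG \<times> VH) (cart_edge EG EH) (u, h) \<inter> A"
          obtain g' h' where qq: "q = (g', h')" by (cases q)
          have "h' \<in> closed_nbhd VH EH h \<inter> S \<and> g' = u"
          proof -
            have q2: "(g', h') \<in> closed_nbhd (VG \<times> VH) (cart_edge EG EH) (u, h)" "(g', h') \<in> A"
              using q qq by auto
            have n: "g' \<in> VG \<and> h' \<in> VH \<and> ((g' = u \<and> (h' = h \<or> EH h h')) \<or> (h' = h \<and> EG u g'))"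
              using q2(1) unfolding nbhd_prod by simp
            have a: "(g' = u \<and> h' \<in> S) \<or> (g' \<in> D \<and> g' \<noteq> u \<and> h' \<in> VH)"
              using q2(2) unfolding A_def by blast
            have gu: "g' = u" using n a unoD by blast
            then have "h' \<in> S" "h' \<in> VH" "h' = h \<or> EH h h'" using n a by blast+
            then show ?thesis using gu unfolding closed_nbhd_def by blast
          qed
          then show "q \<in> {p}" using h qq ps by auto
        qed
      next
        have "s \<in> closed_nbhd VH EH h" using h by blast
        then have "s \<in> VH" "s = h \<or> EH h s" unfolding closed_nbhd_def by blast+
        then have "(u, s) \<in> closed_nbhd (VG \<times> VH) (cart_edge EG EH) (u, h)"
          using uV \<open>s \<in> VH\<close> \<open>s = h \<or> EH h s\<close> by (auto simp: closed_nbhd_def cart_edge_def)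
        then show "{p} \<subseteq> closed_nbhd (VG \<times> VH) (cart_edge EG EH) (u, h) \<inter> A"
          using ps pA by simp
      qed
      moreover have "(u, h) \<in> VG \<times> VH" using uV h by simp
      ultimately show ?thesis by (rule_tac bexI)
    next
      case False
      then have "p \<in> (D - {u}) \<times> VH" using pA unfolding A_def by simp
      then obtain d h where pd: "p = (d, h)" "d \<in> D" "d \<noteq> u" "h \<in> VH"
        by (cases p) simp
      have "d \<notin> cset VG EG D" using cu pd by blast
      hence pnd: "priv_nbhd VG EG d D \<noteq> {d}" using pd unfolding cset_def by blast
      obtain x where x: "x \<in> VG" "closed_nbhd VG EG x \<inter> D = {d}"
        using priv_exists[OF assms(4) pd(2)] by blast
      have "x \<in> priv_nbhd VG EG d D" using x unfolding priv_nbhd_def by blast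
      then obtain x' where x': "x' \<in> priv_nbhd VG EG d D" "x' \<noteq> d" using pnd by blast
      have x'V: "x' \<in> VG" and x'N: "closed_nbhd VG EG x' \<inter> D = {d}"
        using x' unfolding priv_nbhd_def by blast+
      have x'self: "x' \<in> closed_nbhd VG EG x'" using x'V unfolding closed_nbhd_def by simp
      have x'D: "x' \<notin> D"
      proof
        assume "x' \<in> D"
        then have "x' \<in> closed_nbhd VG EG x' \<inter> D" using x'self by simp
        then show False using x'N x'(2) by simp
      qed
      have x'u: "x' \<noteq> u" using x'D uD by blast
      have "d \<in> closed_nbhd VG EG x'" using x'N by (metis Int_iff insertI1)
      then have "d = x' \<or> EG x' d" unfolding closed_nbhd_def by simp
      then have Exd: "EG x' d" using x'(2) by simp
      have "closed_nbhd (VG \<times> VH) (cart_edge EG EH) (x', h) \<inter> A = {p}"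
      proof
        show "closed_nbhd (VG \<times> VH) (cart_edge EG EH) (x', h) \<inter> A \<subseteq> {p}"
        proof
          fix q assume q: "q \<in> closed_nbhd (VG \<times> VH) (cart_edge EG EH) (x', h) \<inter> A"
          obtain g' h' where qq: "q = (g', h')" by (cases q)
          have "g' \<in> closed_nbhd VG EG x' \<inter> D \<and> h' = h"
          proof -
            have q2: "(g', h') \<in> closed_nbhd (VG \<times> VH) (cart_edge EG EH) (x', h)" "(g', h') \<in> A"
              using q qq by auto
            have n: "g' \<in> VG \<and> h' \<in> VH \<and> ((g' = x' \<and> (h' = h \<or> EH h h')) \<or> (h' = h \<and> EG x' g'))"
              using q2(1) unfolding nbhd_prod by simp
            have a: "(g' = u \<and> h' \<in> S) \<or> (g' \<in> D \<and> g' \<noteq> u \<and> h' \<in> VH)"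
              using q2(2) unfolding A_def by blast
            have gD: "g' \<in> D" using a uD by blast
            then have gx: "g' \<noteq> x'" using x'D by blast
            then have "h' = h" "EG x' g'" using n by blast+
            then show ?thesis using gD n unfolding closed_nbhd_def by blast
          qed
          then show "q \<in> {p}" using x'N qq pd by auto
        qed
      next
        have "d \<in> VG" using pd DV by blast
        then have "(d, h) \<in> closed_nbhd (VG \<times> VH) (cart_edge EG EH) (x', h)"
          using Exd pd(4) unfolding closed_nbhd_def cart_edge_def by simp
        then show "{p} \<subseteq> closed_nbhd (VG \<times> VH) (cart_edge EG EH) (x', h) \<inter> A"
          using pd pA by simp
      qed
      moreover have "(x', h) \<in> VG \<times> VH" using x'V pd by simp
      ultimately show ?thesis by (rule_tac bexI)
    qed
  qed
  then show "minimal_dominating (VG \<times> VH) (cart_edge EG EH) (({u} \<times> S) \<union> ((D - {u}) \<times> VH))"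
    unfolding A_def .
qed

end
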